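(* Let $N\equiv 3\pmod 4$ be a prime, let $C\in M_2(\mathbb Z)$ with $c:=\det C\neq 0$ and $(c,N)=1$. Choose integers $s,t$ with $sN+tc=1$ and put $X=tc\cdot C^{-1}$. Then for all $Q,T\in\mathscr S$, \[ K(Q,T;NC)=K(XQX^T,T;NI)\,K(s^2Q,T;C). \]
   Context: $\mathscr S$ is the set of symmetric positive definite half-integral $2\times2$ matrices with integral diagonal, $\Lambda$ the set of symmetric integral $2\times 2$ matrices, $I$ the $2\times 2$ identity. For $C'\in M_2(\mathbb Z)$ with $\det C'\neq 0$, $K(Q,T;C')=\sum_De(\mathrm{tr}(AC'^{-1}Q+C'^{-1}DT))$, where $D$ runs over $\{D\in M_2(\mathbb Z)\bmod C'\Lambda:\exists\begin{pmatrix}*&*\\C'&D\end{pmatrix}\in\mathrm{Sp}_4(\mathbb Z)\}$ and $A$ is any matrix with $\begin{pmatrix}A&*\\C'&D\end{pmatrix}\in\mathrm{Sp}_4(\mathbb Z)$; $e(x)=e^{2\pi ix}$. Note $X=t\cdot\mathrm{adj}(C)$ is integral. *)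

theory Defs
  imports "HOL-Analysis.Analysis"
begin

type_synonym imat = "int^2^2"
type_synonym rmat = "real^2^2"

definition rmat :: "imat \<Rightarrow> rmat" where
  "rmat C = (\<chi> i j. real_of_int (C$i$j))"

definition iscale :: "int \<Rightarrow> imat \<Rightarrow> imat" where
  "iscale k C = (\<chi> i j. k * C$i$j)"

definition e :: "real \<Rightarrow> complex" where
  "e x = exp (2 * of_real pi * \<i> * of_real x)"

definition Lambda :: "imat set" where
  "Lambda = {S. transpose S = S}"

text \<open>The 4x4 block matrix (A B; C D) lies in Sp_4(Z), i.e. M^T J M = J with
  J = (0 I; -I 0), written out blockwise.\<close>
definition symp4 :: "imat \<Rightarrow> imat \<Rightarrow> imat \<Rightarrow> imat \<Rightarrow> bool" where
  "symp4 A B C D \<longleftrightarrow>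
     transpose A ** C = transpose C ** A \<and>
     transpose B ** D = transpose D ** B \<and>
     transpose A ** D - transpose C ** B = mat 1"

definition Dset :: "imat \<Rightarrow> imat set" where
  "Dset C' = {D. \<exists>A B. symp4 A B C' D}"

definition Drel :: "imat \<Rightarrow> (imat \<times> imat) set" where
  "Drel C' = {(D, D'). D \<in> Dset C' \<and> D' \<in> Dset C' \<and> (\<exists>S\<in>Lambda. D' = D + C' ** S)}"

text \<open>The Kloosterman sum K(Q,T;C'): sum over the classes of admissible D modulo
  C' Lambda, with a chosen representative D of each class and a chosen A completing
  (C', D) to a symplectic matrix (the summand does not depend on these choices).\<close>
definition Kl :: "rmat \<Rightarrow> rmat \<Rightarrow> imat \<Rightarrow> complex" where
  "Kl Q T C' = (\<Sum>cl \<in> Dset C' // Drel C'.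
      let D = (SOME D. D \<in> cl);
          A = (SOME A. \<exists>B. symp4 A B C' D);
          Ci = matrix_inv (rmat C')
      in e (trace (rmat A ** Ci ** Q + Ci ** rmat D ** T)))"

definition Sset :: "rmat set" where
  "Sset = {Q. transpose Q = Q \<and> (\<forall>i. Q$i$i \<in> \<int>) \<and> (\<forall>i j. 2 * Q$i$j \<in> \<int>) \<and>
              (\<forall>x. x \<noteq> 0 \<longrightarrow> x \<bullet> (Q *v x) > 0)}"

end

theory Submission
  imports Defs
begin


definition adj :: "imat \<Rightarrow> imat" where
  "adj M = (\<chi> i j. if i = 1 \<and> j = 1 then M$2$2 else if i = 1 \<and> j = 2 then - M$1$2
      else if i = 2 \<and> j = 1 then - M$2$1 else M$1$1)"

definition symm :: "imat \<Rightarrow> bool" where "symm M \<longleftrightarrow> transpose M = M"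

lemma imat_eqI: "(A::'a^2^2)$1$1 = B$1$1 \<Longrightarrow> A$1$2 = B$1$2 \<Longrightarrow> A$2$1 = B$2$1 \<Longrightarrow> A$2$2 = B$2$2 \<Longrightarrow> A = B"
  by (simp add: vec_eq_iff forall_2)

lemma mm_ent: "((A::'a::semiring_1^2^2) ** B)$i$j = A$i$1 * B$1$j + A$i$2 * B$2$j"
  by (simp add: matrix_matrix_mult_def sum_2)

lemma adj_ent: "adj M$1$1 = M$2$2" "adj M$1$2 = - M$1$2" "adj M$2$1 = - M$2$1" "adj M$2$2 = M$1$1"
  by (simp_all add: adj_def)

lemma iscale_ent: "iscale k M $i$j = k * M$i$j" by (simp add: iscale_def)
lemma mat_ent: "(mat k :: 'a::zero^2^2)$i$j = (if i = j then k else 0)" by (simp add: mat_def)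
lemma tr_ent: "transpose M $i$j = M$j$i" by (simp add: transpose_def)

lemmas ents = mm_ent adj_ent iscale_ent mat_ent tr_ent

lemma adj_right: "M ** adj M = mat (det M)"
  by (rule imat_eqI) (simp_all add: ents det_2 algebra_simps)
lemma adj_left: "adj M ** M = mat (det M)"
  by (rule imat_eqI) (simp_all add: ents det_2 algebra_simps)

lemma iscale_is_mat: "iscale k M = mat k ** M"
  by (rule imat_eqI) (simp_all add: ents)
lemma mat_comm: "mat k ** (M::int^2^2) = M ** mat k"
  by (rule imat_eqI) (simp_all add: ents)
lemma iscale_left[simp]: "iscale k A ** B = iscale k (A ** B)"
  by (rule imat_eqI) (simp_all add: ents algebra_simps)
lemma iscale_right[simp]: "A ** iscale k B = iscale k (A ** B)"
  by (rule imat_eqI) (simp_all add: ents algebra_simps)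
lemma iscale_iscale[simp]: "iscale a (iscale b M) = iscale (a*b) M"
  by (rule imat_eqI) (simp_all add: ents algebra_simps)
lemma transpose_iscale[simp]: "transpose (iscale k M) = iscale k (transpose M)"
  by (rule imat_eqI) (simp_all add: ents)
lemma iscale_add: "iscale k (A + B) = iscale k A + iscale k B"
  by (rule imat_eqI) (simp_all add: ents algebra_simps)
lemma iscale_diff: "iscale k (A - B) = iscale k A - iscale k B"
  by (rule imat_eqI) (simp_all add: ents algebra_simps)
lemma iscale_addk: "iscale (a + b) A = iscale a A + iscale b A"
  by (rule imat_eqI) (simp_all add: ents algebra_simps)
lemma iscale_diffk: "iscale (a - b) A = iscale a A - iscale b A"
  by (rule imat_eqI) (simp_all add: ents algebra_simps)
lemma iscale_1[simp]: "iscale 1 A = A"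
  by (rule imat_eqI) (simp_all add: ents)
lemma iscale_0[simp]: "iscale 0 A = 0"
  by (rule imat_eqI) (simp_all add: ents)
lemma iscale_mat[simp]: "iscale k (mat m) = mat (k * m)"
  by (rule imat_eqI) (simp_all add: ents)
lemma mat_mul_left[simp]: "mat k ** (A::int^2^2) = iscale k A"
  by (rule imat_eqI) (simp_all add: ents)
lemma mat_mul_right[simp]: "(A::int^2^2) ** mat k = iscale k A"
  by (rule imat_eqI) (simp_all add: ents)
lemma iscale_cancel: "k \<noteq> 0 \<Longrightarrow> iscale k A = iscale k B \<Longrightarrow> A = B"
  by (simp add: iscale_def vec_eq_iff)
lemma mm_diff_l: "(A::int^2^2) ** (B - C::int^2^2) = A ** B - A ** C"
  by (rule imat_eqI) (simp_all add: ents algebra_simps)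
lemma mm_diff_r: "((B::int^2^2) - C) ** (A::int^2^2) = B ** A - C ** A"
  by (rule imat_eqI) (simp_all add: ents algebra_simps)
lemma mm_add_r: "((B::int^2^2) + C) ** (A::int^2^2) = B ** A + C ** A"
  by (rule imat_eqI) (simp_all add: ents algebra_simps)
lemma mm_add_l: "(A::int^2^2) ** (B + C::int^2^2) = A ** B + A ** C"
  by (rule imat_eqI) (simp_all add: ents algebra_simps)
lemma transpose_add[simp]: "transpose ((A::int^2^2) + B) = transpose A + transpose B"
  by (rule imat_eqI) (simp_all add: ents)
lemma transpose_diff[simp]: "transpose ((A::int^2^2) - B) = transpose A - transpose B"
  by (rule imat_eqI) (simp_all add: ents)
lemma transpose_0[simp]: "transpose (0::int^2^2) = 0"
  by (rule imat_eqI) (simp_all add: ents)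
lemma mm_0[simp]: "(A::int^2^2) ** 0 = 0" "0 ** (A::int^2^2) = 0"
  by simp_all
lemma transpose_mm: "transpose ((A::int^2^2) ** B) = transpose B ** transpose A"
  by (rule matrix_transpose_mul)
lemma adj_iscale: "adj (iscale k M) = iscale k (adj M)"
  by (rule imat_eqI) (simp_all add: ents)
lemma det_iscale: "det (iscale k M) = k^2 * det M"
  by (simp add: det_2 ents power2_eq_square algebra_simps)
lemma adj_mat: "adj (mat k) = mat k"
  by (rule imat_eqI) (simp_all add: ents)
lemma det_mat2: "det (mat k :: int^2^2) = k^2"
  by (simp add: det_2 ents power2_eq_square)
lemma adj_transpose: "adj (transpose M) = transpose (adj M)"
  by (rule imat_eqI) (simp_all add: ents)
lemma det_transpose2: "det (transpose (M::int^2^2)) = det M"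
  by (simp add: det_2 ents)



lemma symm_cancel: "k \<noteq> 0 \<Longrightarrow> symm (iscale k M) \<Longrightarrow> symm M"
  unfolding symm_def by (auto intro: iscale_cancel)

lemma adjT_right: "transpose (adj C) ** transpose C = mat (det C)"
  by (rule imat_eqI) (simp_all add: ents det_2 algebra_simps)
lemma adjT_left: "transpose C ** transpose (adj C) = mat (det C)"
  by (rule imat_eqI) (simp_all add: ents det_2 algebra_simps)

lemma L1:
  assumes "symp4 A B C D" "det C \<noteq> 0"
  shows "symm (A ** adj C)" "iscale (det C) B = A ** adj C ** D - transpose (adj C)"
    "symm (adj C ** D)" "D ** transpose A - C ** transpose B = mat 1"
proof -
  let ?J = "adj C" and ?c = "det C"
  have E1: "transpose A ** C = transpose C ** A" and E2: "transpose B ** D = transpose D ** B"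
    and E3: "transpose A ** D - transpose C ** B = mat 1" using assms(1) by (auto simp: symp4_def)
  have "iscale ?c (transpose ?J ** transpose A) = transpose ?J ** transpose A ** (C ** ?J)"
    by (simp add: adj_right)
  also have "\<dots> = transpose ?J ** (transpose A ** C) ** ?J" by (simp add: matrix_mul_assoc)
  also have "\<dots> = (transpose ?J ** transpose C) ** (A ** ?J)" by (simp add: E1 matrix_mul_assoc)
  also have "\<dots> = iscale ?c (A ** ?J)" by (simp add: adjT_right)
  finally have "transpose (A ** ?J) = A ** ?J"
    using assms(2) by (simp add: transpose_mm) (rule iscale_cancel)
  then show i: "symm (A ** ?J)" by (simp add: symm_def)
  have "transpose ?J ** (transpose A ** D - transpose C ** B) = transpose ?J"
    by (simp add: E3)
  then have "transpose ?J ** transpose A ** D - iscale ?c B = transpose ?J"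
    by (simp add: mm_diff_l matrix_mul_assoc adjT_right)
  moreover have "transpose ?J ** transpose A = A ** ?J"
    using i by (simp add: symm_def transpose_mm)
  ultimately show iii: "iscale ?c B = A ** ?J ** D - transpose ?J"
    by (metis add_diff_cancel_left' diff_add_cancel)
  have h: "iscale ?c (transpose B ** D) = transpose D ** (A ** ?J) ** D - ?J ** D"
  proof -
    have "iscale ?c (transpose B ** D) = transpose (iscale ?c B) ** D" by simp
    also have "\<dots> = transpose D ** transpose (A ** ?J) ** D - ?J ** D"
      by (simp add: iii transpose_mm mm_diff_r matrix_mul_assoc)
    also have "\<dots> = transpose D ** (A ** ?J) ** D - ?J ** D"
      using i by (simp add: symm_def)
    finally show ?thesis .
  qed
  have "?J ** D = transpose D ** (A ** ?J) ** D - iscale ?c (transpose B ** D)"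
    using h by (simp add: algebra_simps)
  then have "transpose (?J ** D) = transpose (transpose D ** (A ** ?J) ** D) - iscale ?c (transpose (transpose B ** D))"
    by simp
  also have "\<dots> = transpose D ** (A ** ?J) ** D - iscale ?c (transpose B ** D)"
    using i E2 by (simp add: symm_def transpose_mm matrix_mul_assoc)
  also have "\<dots> = ?J ** D" using h by (simp add: algebra_simps)
  finally show ii: "symm (?J ** D)" by (simp add: symm_def)
  have jd: "?J ** D = transpose D ** transpose ?J" using ii by (simp add: symm_def transpose_mm)
  have "iscale ?c (B ** transpose C) = (A ** ?J ** D - transpose ?J) ** transpose C"
    by (simp add: iii[symmetric])
  also have "\<dots> = A ** ?J ** D ** transpose C - transpose ?J ** transpose C"
    by (rule mm_diff_r)
  also have "A ** ?J ** D ** transpose C = A ** (?J ** D) ** transpose C" by (simp add: matrix_mul_assoc)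
  also have "\<dots> = A ** transpose D ** (transpose ?J ** transpose C)" by (simp add: jd matrix_mul_assoc)
  finally have "iscale ?c (B ** transpose C) = iscale ?c (A ** transpose D - mat 1)"
    by (simp add: adjT_right iscale_diff)
  then have "B ** transpose C = A ** transpose D - mat 1" by (rule iscale_cancel[OF assms(2)])
  then have "transpose (B ** transpose C) = transpose (A ** transpose D - mat 1)" by simp
  then show "D ** transpose A - C ** transpose B = mat 1"
    by (simp add: transpose_mm algebra_simps)
qed

lemma L2:
  assumes "det C \<noteq> 0" "symm (A ** adj C)" "symm (adj C ** D)"
    "iscale (det C) B = A ** adj C ** D - transpose (adj C)"
  shows "symp4 A B C D"
proof -
  let ?J = "adj C" and ?c = "det C"
  have jt: "transpose ?J ** transpose A = A ** ?J" using assms(2) by (simp add: symm_def transpose_mm)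
  have "iscale ?c (transpose A ** C) = transpose C ** (transpose ?J ** transpose A) ** C"
    by (simp add: matrix_mul_assoc adjT_left)
  also have "\<dots> = transpose C ** A ** (?J ** C)" by (simp add: jt matrix_mul_assoc)
  also have "\<dots> = iscale ?c (transpose C ** A)" by (simp add: adj_left)
  finally have E1: "transpose A ** C = transpose C ** A" by (rule iscale_cancel[OF assms(1)])
  have "iscale ?c (transpose A ** D - transpose C ** B) = iscale ?c (transpose A ** D) - transpose C ** (A ** ?J ** D - transpose ?J)"
    by (simp add: iscale_diff flip: assms(4))
  also have "\<dots> = iscale ?c (transpose A ** D) - (transpose A ** C) ** ?J ** D + mat ?c"
    by (simp add: mm_diff_l matrix_mul_assoc E1 adjT_left)
  also have "\<dots> = iscale ?c (mat 1)"
    by (simp add: adj_right flip: matrix_mul_assoc)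
  finally have E3: "transpose A ** D - transpose C ** B = mat 1" by (rule iscale_cancel[OF assms(1)])
  have h: "iscale ?c (transpose B ** D) = transpose D ** (A ** ?J) ** D - ?J ** D"
  proof -
    have "iscale ?c (transpose B ** D) = transpose (iscale ?c B) ** D" by simp
    also have "\<dots> = transpose D ** transpose (A ** ?J) ** D - ?J ** D"
      by (simp add: assms(4) transpose_mm mm_diff_r matrix_mul_assoc)
    also have "\<dots> = transpose D ** (A ** ?J) ** D - ?J ** D"
      using assms(2) by (simp add: symm_def)
    finally show ?thesis .
  qed
  have "symm (iscale ?c (transpose B ** D))"
    unfolding h symm_def using assms(2,3) by (simp add: symm_def transpose_mm matrix_mul_assoc)
  then have "symm (transpose B ** D)" by (rule symm_cancel[OF assms(1)])
  then have E2: "transpose B ** D = transpose D ** B" by (simp add: symm_def transpose_mm)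
  show ?thesis unfolding symp4_def by (intro conjI E1 E2 E3)
qed



lemma adj_left_assoc: "X ** adj C ** C = iscale (det C) X"
  by (metis adj_left matrix_mul_assoc mat_mul_right)
lemma adj_right_assoc: "X ** C ** adj C = iscale (det C) X"
  by (metis adj_right matrix_mul_assoc mat_mul_right)

lemma symm_iscale: "symm M \<Longrightarrow> symm (iscale k M)" by (simp add: symm_def)
lemma symm_add: "symm M \<Longrightarrow> symm M' \<Longrightarrow> symm (M + M')" by (simp add: symm_def)
lemma symm_diff: "symm M \<Longrightarrow> symm M' \<Longrightarrow> symm (M - M')" by (simp add: symm_def)
lemma symm_conj: "symm M \<Longrightarrow> symm (transpose X ** M ** X)"
  by (simp add: symm_def transpose_mm matrix_mul_assoc)

lemma big_facts:
  assumes "symp4 A B (iscale N C) D" "N \<noteq> 0" "det C \<noteq> 0"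
  shows "transpose A ** C = transpose C ** A" "symm (A ** adj C)" "symm (adj C ** D)"
    "A ** adj C ** D = iscale (N * det C) B + transpose (adj C)"
    "transpose A ** D = mat 1 + iscale N (transpose C ** B)"
proof -
  have dnz: "det (iscale N C) \<noteq> 0" using assms by (simp add: det_iscale)
  note l = L1[OF assms(1) dnz]
  have E1: "transpose A ** iscale N C = transpose (iscale N C) ** A"
    and E3: "transpose A ** D - transpose (iscale N C) ** B = mat 1"
    using assms(1) by (auto simp: symp4_def)
  show "transpose A ** C = transpose C ** A"
    using E1 by (simp add: iscale_cancel[OF assms(2)])
  show "symm (A ** adj C)" using l(1) by (simp add: adj_iscale symm_cancel[OF assms(2)])
  show "symm (adj C ** D)" using l(3) by (simp add: adj_iscale symm_cancel[OF assms(2)])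
  have "iscale N (iscale (N * det C) B) = iscale N (A ** adj C ** D - transpose (adj C))"
    using l(2) by (simp add: adj_iscale det_iscale iscale_diff power2_eq_square mult.assoc)
  then have "iscale (N * det C) B = A ** adj C ** D - transpose (adj C)"
    by (rule iscale_cancel[OF assms(2)])
  then show "A ** adj C ** D = iscale (N * det C) B + transpose (adj C)"
    by (simp add: algebra_simps)
  show "transpose A ** D = mat 1 + iscale N (transpose C ** B)"
    using E3 by (simp add: algebra_simps)
qed

lemma F1:
  assumes "symp4 A B (iscale N C) D" "N \<noteq> 0" "det C \<noteq> 0" "s * N + t * det C = 1"
  shows "symp4 (transpose A ** C) (iscale (-s) (mat 1) + iscale (t * det C) (transpose C ** B))
     (mat N) (iscale t (adj C ** D))"
proof -
  note bf = big_facts[OF assms(1-3)]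
  have dN: "det (mat N :: imat) = N * N" by (simp add: det_mat2 power2_eq_square)
  have d: "det (mat N :: imat) \<noteq> 0" using assms(2) by (simp add: dN)
  have s1: "symm (transpose A ** C)" using bf(1) by (simp add: symm_def transpose_mm)
  have key: "transpose A ** C ** (adj C ** D) = iscale (det C) (mat 1 + iscale N (transpose C ** B))"
    by (simp add: matrix_mul_assoc adj_right_assoc flip: bf(5))
  have g1: "symm (transpose A ** C ** adj (mat N))" using s1 by (simp add: adj_mat symm_iscale)
  have g2: "symm (adj (mat N) ** iscale t (adj C ** D))" using bf(3) by (simp add: adj_mat symm_iscale)
  have "transpose A ** C ** adj (mat N) ** iscale t (adj C ** D) - transpose (adj (mat N)) =
      iscale (N * t) (iscale (det C) (mat 1 + iscale N (transpose C ** B))) - mat N"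
    by (simp add: adj_mat flip: key) (simp add: matrix_mul_assoc mult.commute)
  also have "\<dots> = iscale (det (mat N :: imat)) (iscale (-s) (mat 1) + iscale (t * det C) (transpose C ** B))"
    apply (rule imat_eqI)
    apply (simp_all add: iscale_ent mat_ent dN)
    using assms(4) by algebra+
  finally have g3: "iscale (det (mat N :: imat)) (iscale (-s) (mat 1) + iscale (t * det C) (transpose C ** B)) =
      transpose A ** C ** adj (mat N) ** iscale t (adj C ** D) - transpose (adj (mat N))" by (rule sym)
  show ?thesis by (rule L2[OF d g1 g2 g3])
qed

lemma F2:
  assumes "symp4 A B (iscale N C) D" "N \<noteq> 0" "det C \<noteq> 0" "s * N + t * det C = 1"
  shows "symp4 (iscale N A) (iscale (s * N * N) B - iscale t (transpose (adj C))) C (iscale s D)"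
proof -
  note bf = big_facts[OF assms(1-3)]
  have g1: "symm (iscale N A ** adj C)" using bf(2) by (simp add: symm_iscale)
  have g2: "symm (adj C ** iscale s D)" using bf(3) by (simp add: symm_iscale)
  have "iscale N A ** adj C ** iscale s D - transpose (adj C) =
     iscale (N * s) (iscale (N * det C) B + transpose (adj C)) - transpose (adj C)"
    by (simp flip: bf(4) add: mult.commute)
  also have "\<dots> = iscale (det C) (iscale (s * N * N) B - iscale t (transpose (adj C)))"
    apply (rule imat_eqI)
    apply (simp_all add: iscale_ent)
    using assms(4) by algebra+
  finally have g3: "iscale (det C) (iscale (s * N * N) B - iscale t (transpose (adj C))) =
     iscale N A ** adj C ** iscale s D - transpose (adj C)" by (rule sym)
  show ?thesis by (rule L2[OF assms(3) g1 g2 g3])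
qed

lemma WD:
  assumes "D' = D + iscale N C ** S"
  shows "iscale t (adj C ** D') = iscale t (adj C ** D) + mat N ** iscale (t * det C) S"
    "iscale s D' = iscale s D + C ** iscale (s * N) S"
proof -
  have "adj C ** (iscale N C ** S) = iscale N (iscale (det C) S)"
    by (simp add: matrix_mul_assoc adj_left)
  then show "iscale t (adj C ** D') = iscale t (adj C ** D) + mat N ** iscale (t * det C) S"
    by (simp add: assms mm_add_l iscale_add mult_ac)
  show "iscale s D' = iscale s D + C ** iscale (s * N) S"
    by (simp add: assms iscale_add mult_ac)
qed

lemma INJ:
  assumes h1: "iscale t (adj C ** D') = iscale t (adj C ** D) + mat N ** S1"
    and h2: "iscale s D' = iscale s D + C ** S2" and hyp: "s * N + t * det C = 1"
  shows "D' = D + iscale N C ** (S1 + S2)"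
proof -
  have a: "iscale N S1 = iscale t (adj C ** D') - iscale t (adj C ** D)" using h1 by simp
  have b: "C ** S2 = iscale s D' - iscale s D" using h2 by simp
  have "iscale N C ** (S1 + S2) = C ** iscale N S1 + iscale N (C ** S2)"
    by (simp add: mm_add_l)
  also have "\<dots> = iscale (t * det C) D' - iscale (t * det C) D + iscale N (iscale s D' - iscale s D)"
    by (simp only: a b mm_diff_l iscale_right matrix_mul_assoc adj_right mat_mul_left iscale_iscale mult.commute)
  finally have "iscale N C ** (S1 + S2) = iscale (t * det C) D' - iscale (t * det C) D + iscale N (iscale s D' - iscale s D)" .
  moreover have "D + (iscale (t * det C) D' - iscale (t * det C) D + iscale N (iscale s D' - iscale s D)) = D'"
    apply (rule imat_eqI)
    apply (simp_all add: iscale_ent)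
    using hyp by algebra+
  ultimately show ?thesis by simp
qed

lemma REL:
  assumes hyp: "s * N + t * det C = 1"
  shows "iscale t (adj C ** (iscale N D2 + C ** D1)) = D1 + mat N ** (iscale t (adj C ** D2) - iscale s D1)"
    "iscale s (iscale N D2 + C ** D1) = D2 + C ** (iscale s D1 - iscale t (adj C ** D2))"
proof -
  have "iscale t (adj C ** (iscale N D2 + C ** D1)) = iscale (t * N) (adj C ** D2) + iscale (t * det C) D1"
    by (simp add: mm_add_l iscale_add matrix_mul_assoc adj_left)
  also have "\<dots> = D1 + mat N ** (iscale t (adj C ** D2) - iscale s D1)"
    apply (rule imat_eqI)
    apply (simp_all add: iscale_ent)
    using hyp by algebra+
  finally show "iscale t (adj C ** (iscale N D2 + C ** D1)) = D1 + mat N ** (iscale t (adj C ** D2) - iscale s D1)" .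
  have "D2 + C ** (iscale s D1 - iscale t (adj C ** D2)) = D2 + iscale s (C ** D1) - iscale (t * det C) D2"
    by (simp add: mm_diff_l matrix_mul_assoc adj_right)
  also have "\<dots> = iscale s (iscale N D2 + C ** D1)"
    apply (rule imat_eqI)
    apply (simp_all add: iscale_ent)
    using hyp by algebra+
  finally show "iscale s (iscale N D2 + C ** D1) = D2 + C ** (iscale s D1 - iscale t (adj C ** D2))" by (rule sym)
qed

lemma SURJ:
  assumes m1: "symp4 A1 B1 (mat N) D1" and m2: "symp4 A2 B2 C D2"
    and nz: "N \<noteq> 0" "det C \<noteq> 0" and hyp: "s * N + t * det C = 1"
  shows "symp4 (iscale (s * s * N) A2 + iscale (t * t * det C) (transpose (adj C) ** A1))
    (iscale (s * s * N) B2 + iscale (s * s) (A2 ** D1) + iscale (t * t) (transpose (adj C) ** A1 ** adj C ** D2)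
      + iscale (t * t * det C) (transpose (adj C) ** B1) - iscale (2 * s * t) (transpose (adj C)))
    (iscale N C) (iscale N D2 + C ** D1)"
proof -
  let ?J = "adj C" and ?c = "det C"
  define A where "A = iscale (s * s * N) A2 + iscale (t * t * det C) (transpose (adj C) ** A1)"
  define B where "B = iscale (s * s * N) B2 + iscale (s * s) (A2 ** D1) + iscale (t * t) (transpose (adj C) ** A1 ** adj C ** D2)
      + iscale (t * t * det C) (transpose (adj C) ** B1) - iscale (2 * s * t) (transpose (adj C))"
  define D where "D = iscale N D2 + C ** D1"
  have dN: "det (mat N :: imat) = N * N" by (simp add: det_mat2 power2_eq_square)
  have d1: "det (mat N :: imat) \<noteq> 0" using nz by (simp add: dN)
  note l1 = L1[OF m1 d1] and l2 = L1[OF m2 nz(2)]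
  have sA1: "symm A1" using l1(1) by (simp add: adj_mat symm_cancel[OF nz(1)])
  have "iscale N (iscale N B1) = iscale N (A1 ** D1 - mat 1)"
    using l1(2) by (simp add: adj_mat dN iscale_diff mult.assoc)
  then have "iscale N B1 = A1 ** D1 - mat 1" by (rule iscale_cancel[OF nz(1)])
  then have a1d1: "A1 ** D1 = iscale N B1 + mat 1" by (simp add: algebra_simps)
  have x1: "A2 ** ?J ** C ** D1 = iscale ?c (A2 ** D1)" by (simp add: adj_left_assoc)
  have x2: "transpose ?J ** A1 ** ?J ** C ** D1 = iscale ?c (iscale N (transpose ?J ** B1) + transpose ?J)"
  proof -
    have "transpose ?J ** A1 ** ?J ** C ** D1 = iscale ?c (transpose ?J ** (A1 ** D1))"
      by (simp add: adj_left_assoc matrix_mul_assoc)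
    then show ?thesis by (simp add: a1d1 mm_add_l)
  qed
  have x3: "A2 ** ?J ** D2 = iscale ?c B2 + transpose ?J" using l2(2) by simp
  have dnz: "det (iscale N C) \<noteq> 0" using nz by (simp add: det_iscale)
  have g1: "symm (A ** adj (iscale N C))"
  proof -
    have "A ** adj (iscale N C) = iscale N (iscale (s * s * N) (A2 ** ?J) + iscale (t * t * ?c) (transpose ?J ** A1 ** ?J))"
      by (simp add: A_def adj_iscale mm_add_r)
    then show ?thesis using l2(1) symm_conj[OF sA1, of ?J]
      by (simp add: symm_iscale symm_add)
  qed
  have g2: "symm (adj (iscale N C) ** D)"
  proof -
    have "adj (iscale N C) ** D = iscale N (iscale N (?J ** D2) + iscale ?c D1)"
      by (simp add: D_def adj_iscale mm_add_l matrix_mul_assoc adj_left iscale_add)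
    moreover have "symm D1" using l1(3) by (simp add: adj_mat symm_cancel[OF nz(1)])
    ultimately show ?thesis using l2(3) by (simp add: symm_iscale symm_add)
  qed
  have "A ** ?J ** D = iscale (s * s * N*N) (A2 ** ?J ** D2) + iscale (s * s * N) (A2 ** ?J ** C ** D1)
      + iscale (t * t * ?c*N) (transpose ?J ** A1 ** ?J ** D2) + iscale (t * t * ?c) (transpose ?J ** A1 ** ?J ** C ** D1)"
    by (simp add: A_def D_def mm_add_l mm_add_r matrix_mul_assoc iscale_add mult_ac add_ac)
  also have "\<dots> = iscale (s * s * N*N) (iscale ?c B2 + transpose ?J) + iscale (s * s * N) (iscale ?c (A2 ** D1))
      + iscale (t * t * ?c*N) (transpose ?J ** A1 ** ?J ** D2) + iscale (t * t * ?c) (iscale ?c (iscale N (transpose ?J ** B1) + transpose ?J))"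
    by (simp only: x1 x2 x3)
  also have "\<dots> = iscale (N * ?c) B + transpose ?J"
    unfolding B_def
    apply (rule imat_eqI)
    apply (simp_all add: iscale_ent)
    using hyp by algebra+
  finally have e: "A ** ?J ** D = iscale (N * ?c) B + transpose ?J" .
  have g3: "iscale (det (iscale N C)) B = A ** adj (iscale N C) ** D - transpose (adj (iscale N C))"
    by (simp add: det_iscale adj_iscale e iscale_add power2_eq_square mult_ac)
  show ?thesis using L2[OF dnz g1 g2 g3] by (simp add: A_def B_def D_def)
qed



lemma rmat_ent: "rmat M $ i $ j = real_of_int (M$i$j)" by (simp add: rmat_def)

lemma rmat_mm: "rmat (A ** B) = rmat A ** rmat B"
  by (rule imat_eqI) (simp_all add: rmat_ent mm_ent)
lemma rmat_iscale: "rmat (iscale k M) = of_int k *\<^sub>R rmat M"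
  by (rule imat_eqI) (simp_all add: rmat_ent iscale_ent)
lemma rmat_transpose: "rmat (transpose M) = transpose (rmat M)"
  by (rule imat_eqI) (simp_all add: rmat_ent tr_ent)

lemma minv:
  assumes "det C \<noteq> 0"
  shows "matrix_inv (rmat C) = (1 / real_of_int (det C)) *\<^sub>R rmat (adj C)"
proof -
  let ?Y = "(1 / real_of_int (det C)) *\<^sub>R rmat (adj C)"
  have dr: "real_of_int (det C) \<noteq> 0" using assms by simp
  have rm: "rmat (mat k) = mat (real_of_int k)" for k by (rule imat_eqI) (simp_all add: rmat_ent mat_ent)
  have sm: "(1 / real_of_int (det C)) *\<^sub>R (mat (real_of_int (det C)) :: rmat) = mat 1"
    using dr by (intro imat_eqI) (simp_all add: mat_ent)
  have r: "rmat C ** ?Y = mat 1"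
  proof -
    have "rmat C ** ?Y = (1 / real_of_int (det C)) *\<^sub>R (rmat C ** rmat (adj C))"
      by (simp add: matrix_scalar_ac scalar_matrix_assoc)
    also have "\<dots> = (1 / real_of_int (det C)) *\<^sub>R rmat (mat (det C))" by (simp add: adj_right flip: rmat_mm)
    finally show ?thesis by (simp add: rm sm)
  qed
  have l: "?Y ** rmat C = mat 1"
  proof -
    have "?Y ** rmat C = (1 / real_of_int (det C)) *\<^sub>R (rmat (adj C) ** rmat C)"
      by (simp add: scalar_matrix_assoc)
    also have "\<dots> = (1 / real_of_int (det C)) *\<^sub>R rmat (mat (det C))" by (simp add: adj_left flip: rmat_mm)
    finally show ?thesis by (simp add: rm sm)
  qed
  define Z where "Z = matrix_inv (rmat C)"
  have "rmat C ** Z = mat 1 \<and> Z ** rmat C = mat 1"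
    unfolding Z_def matrix_inv_def by (rule someI[of _ ?Y]) (use r l in auto)
  then have "Z = Z ** (rmat C ** ?Y)" using r by simp
  also have "\<dots> = ?Y" using \<open>rmat C ** Z = mat 1 \<and> Z ** rmat C = mat 1\<close>
    by (simp add: matrix_mul_assoc)
  finally show ?thesis by (simp add: Z_def)
qed

definition tau :: "imat \<Rightarrow> rmat \<Rightarrow> real" where "tau M Q = trace (rmat M ** Q)"

lemma tau_exp: "tau M Q = of_int (M$1$1) * Q$1$1 + of_int (M$1$2) * Q$2$1 + of_int (M$2$1) * Q$1$2 + of_int (M$2$2) * Q$2$2"
  by (simp add: tau_def trace_def sum_2 mm_ent rmat_ent)

lemma summand:
  assumes "det C \<noteq> 0"
  shows "trace (rmat A ** matrix_inv (rmat C) ** Q + matrix_inv (rmat C) ** rmat D ** T)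
     = (tau (A ** adj C) Q + tau (adj C ** D) T) / real_of_int (det C)"
  using assms by (simp add: minv tau_exp trace_def sum_2 mm_ent rmat_ent adj_ent field_simps)

lemma tau_int:
  assumes "symm M" "Q \<in> Sset"
  shows "tau M Q \<in> \<int>"
proof -
  have m: "M$1$2 = M$2$1" using assms(1) tr_ent[of M 2 1] unfolding symm_def by simp
  have tQ: "transpose Q = Q" using assms(2) by (simp add: Sset_def)
  have q: "Q$1$2 = Q$2$1" using tQ tr_ent[of Q 2 1] by simp
  have d: "Q$1$1 \<in> \<int>" "Q$2$2 \<in> \<int>" "2 * Q$1$2 \<in> \<int>" using assms(2) unfolding Sset_def by auto
  have "tau M Q = of_int (M$1$1) * Q$1$1 + of_int (M$2$1) * (2 * Q$1$2) + of_int (M$2$2) * Q$2$2"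
    by (simp add: tau_exp m q algebra_simps)
  also have "\<dots> \<in> \<int>"
    by (rule Ints_add[OF Ints_add]; rule Ints_mult[OF Ints_of_int]) (rule d)+
  finally show ?thesis .
qed

lemma tau_iscale: "tau (iscale k M) Q = of_int k * tau M Q"
  by (simp add: tau_exp iscale_ent algebra_simps)
lemma tau_scaleR: "tau M (r *\<^sub>R Q) = r * tau M Q"
  by (simp add: tau_exp algebra_simps)
lemma tau_transpose: "transpose Q = Q \<Longrightarrow> tau (transpose M) Q = tau M Q"
proof -
  assume tQ: "transpose Q = Q"
  have q: "Q$1$2 = Q$2$1" using tQ tr_ent[of Q 2 1] by simp
  show ?thesis by (simp add: tau_exp tr_ent q)
qed
lemma tau_conj: "tau M (rmat X ** Q ** transpose (rmat X)) = tau (transpose X ** M ** X) Q"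
  by (simp add: tau_exp mm_ent rmat_ent tr_ent algebra_simps)

lemma e_add: "e (x + y) = e x * e y"
  by (simp add: e_def distrib_left distrib_right exp_add)
lemma e_int: "n \<in> \<int> \<Longrightarrow> e (x + n) = e x"
proof -
  assume "n \<in> \<int>"
  then obtain k where k: "n = of_int k" by (auto elim: Ints_cases)
  have "e n = exp ((2 * of_int k * pi) * \<i>)" by (simp add: e_def k mult_ac)
  also have "\<dots> = 1" by (rule exp_integer_2pi) simp
  finally show ?thesis by (simp add: e_add)
qed



definition goodQ :: "rmat \<Rightarrow> bool" where "goodQ Q \<longleftrightarrow> (\<forall>W. symm W \<longrightarrow> tau W Q \<in> \<int>)"

definition val :: "rmat \<Rightarrow> rmat \<Rightarrow> imat \<Rightarrow> imat \<Rightarrow> imat \<Rightarrow> complex" where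
  "val Q T C' D A = e ((tau (A ** adj C') Q + tau (adj C' ** D) T) / real_of_int (det C'))"

definition Gf :: "rmat \<Rightarrow> rmat \<Rightarrow> imat \<Rightarrow> imat set \<Rightarrow> complex" where
  "Gf Q T C' cl = (let D = (SOME D. D \<in> cl);
          A = (SOME A. \<exists>B. symp4 A B C' D);
          Ci = matrix_inv (rmat C')
      in e (trace (rmat A ** Ci ** Q + Ci ** rmat D ** T)))"

lemma Kl_Gf: "Kl Q T C' = (\<Sum>cl \<in> Dset C' // Drel C'. Gf Q T C' cl)"
  unfolding Kl_def Gf_def by (rule refl)

lemma Lambda_symm: "S \<in> Lambda \<longleftrightarrow> symm S" by (simp add: Lambda_def symm_def)

lemma mm_neg: "(A::imat) ** (- S::imat) = - (A ** S)"
  by (rule imat_eqI) (simp_all add: mm_ent algebra_simps)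
lemma transpose_neg: "transpose (- (S::imat)) = - transpose S"
  by (rule imat_eqI) (simp_all add: tr_ent)

lemma equivD: "equiv (Dset C') (Drel C')"
proof (rule equivI)
  show "refl_on (Dset C') (Drel C')"
    unfolding refl_on_def Drel_def Lambda_def
    by (auto intro!: exI[of _ "0::imat"])
  show "sym (Drel C')"
  proof (rule symI)
    fix D D' assume "(D, D') \<in> Drel C'"
    then obtain S where h: "D \<in> Dset C'" "D' \<in> Dset C'" "S \<in> Lambda" "D' = D + C' ** S"
      by (auto simp: Drel_def)
    have "- S \<in> Lambda" "D = D' + C' ** (- S)" using h by (auto simp: Lambda_def mm_neg transpose_neg)
    then show "(D', D) \<in> Drel C'" unfolding Drel_def using h by blast
  qed
  show "trans (Drel C')"
  proof (rule transI)
    fix D D' D'' assume "(D, D') \<in> Drel C'" "(D', D'') \<in> Drel C'"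
    then obtain S S' where h: "D \<in> Dset C'" "D'' \<in> Dset C'" "S \<in> Lambda" "D' = D + C' ** S"
       "S' \<in> Lambda" "D'' = D' + C' ** S'"
      by (auto simp: Drel_def)
    have "S + S' \<in> Lambda" "D'' = D + C' ** (S + S')" using h by (auto simp: Lambda_def mm_add_l add.assoc)
    then show "(D, D'') \<in> Drel C'" unfolding Drel_def using h by blast
  qed
  show "Drel C' \<subseteq> Dset C' \<times> Dset C'" by (auto simp: Drel_def)
qed

lemma tau_add: "tau (M + M') Q = tau M Q + tau M' Q"
  by (simp add: tau_exp algebra_simps)

lemma goodQ_Sset: "Q \<in> Sset \<Longrightarrow> goodQ Q"
  by (simp add: goodQ_def tau_int)

lemma IND:
  assumes dz: "det C' \<noteq> 0" and gQ: "goodQ Q" and gT: "goodQ T"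
    and s1: "symp4 A B C' D" and s2: "symp4 A' B' C' D'" and r: "(D, D') \<in> Drel C'"
  shows "val Q T C' D A = val Q T C' D' A'"
proof -
  let ?J = "adj C'" and ?c = "det C'"
  obtain S where sS: "symm S" and D': "D' = D + C' ** S"
    using r by (auto simp: Drel_def Lambda_symm)
  note l = L1[OF s1 dz]
  have js: "?J ** (C' ** S) = iscale ?c S" by (simp add: matrix_mul_assoc adj_left)
  have ajs: "A ** ?J ** (C' ** S) = iscale ?c (A ** S)" by (simp add: matrix_mul_assoc adj_left_assoc)
  have jd': "?J ** D' = ?J ** D + iscale ?c S" by (simp add: D' mm_add_l js)
  have m: "symp4 A (B + A ** S) C' D'"
  proof (rule L2[OF dz l(1)])
    show "symm (?J ** D')" using l(3) sS by (simp add: jd' symm_add symm_iscale)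
    show "iscale ?c (B + A ** S) = A ** ?J ** D' - transpose ?J"
      by (simp add: iscale_add l(2) D' mm_add_l ajs algebra_simps)
  qed
  let ?B2 = "B + A ** S"
  note lm = L1[OF m dz] and l' = L1[OF s2 dz]
  let ?X = "A' - A"
  have xjd: "?X ** ?J ** D' = iscale ?c (B' - ?B2)"
    using lm(2) l'(2) by (simp add: mm_diff_r iscale_diff)
  have xjc: "?X ** ?J ** C' = iscale ?c ?X" by (simp add: adj_left_assoc)
  have "?X ** ?J = ?X ** ?J ** (D' ** transpose A - C' ** transpose ?B2)"
    using lm(4) by simp
  also have "\<dots> = ?X ** ?J ** D' ** transpose A - ?X ** ?J ** C' ** transpose ?B2"
    by (simp add: mm_diff_l matrix_mul_assoc)
  also have "\<dots> = iscale ?c ((B' - ?B2) ** transpose A - ?X ** transpose ?B2)"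
    by (simp only: xjd xjc iscale_left iscale_diff[symmetric])
  finally have w: "?X ** ?J = iscale ?c ((B' - ?B2) ** transpose A - ?X ** transpose ?B2)" .
  define W where "W = (B' - ?B2) ** transpose A - ?X ** transpose ?B2"
  have "symm (iscale ?c W)" unfolding W_def[symmetric] using w l'(1) l(1)
    by (metis W_def mm_diff_r symm_diff)
  then have sW: "symm W" by (rule symm_cancel[OF dz])
  have aj': "A' ** ?J = A ** ?J + iscale ?c W"
  proof -
    have "A' ** ?J = A ** ?J + ?X ** ?J" by (simp add: mm_diff_r)
    then show ?thesis by (simp only: w W_def)
  qed
  have i1: "tau W Q \<in> \<int>" using gQ sW by (simp add: goodQ_def)
  have i2: "tau S T \<in> \<int>" using gT sS by (simp add: goodQ_def)
  have cr: "real_of_int ?c \<noteq> 0" using dz by simp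
  have "(tau (A' ** ?J) Q + tau (?J ** D') T) / real_of_int ?c =
      (tau (A ** ?J) Q + tau (?J ** D) T) / real_of_int ?c + (tau W Q + tau S T)"
    using cr by (simp add: aj' jd' tau_add tau_iscale field_simps)
  then have "val Q T C' D' A' = e ((tau (A ** ?J) Q + tau (?J ** D) T) / real_of_int ?c + (tau W Q + tau S T))"
    by (simp add: val_def)
  also have "\<dots> = val Q T C' D A" unfolding val_def by (rule e_int) (intro Ints_add i1 i2)
  finally show ?thesis by simp
qed

lemma Gval:
  assumes dz: "det C' \<noteq> 0" and gQ: "goodQ Q" and gT: "goodQ T" and s1: "symp4 A B C' D"
  shows "Gf Q T C' (Drel C' `` {D}) = val Q T C' D A"
proof -
  have eq: "equiv (Dset C') (Drel C')" by (rule equivD)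
  have D: "D \<in> Dset C'" using s1 by (auto simp: Dset_def)
  define D0 where "D0 = (SOME D0. D0 \<in> Drel C' `` {D})"
  have "D0 \<in> Drel C' `` {D}" unfolding D0_def by (rule someI[of _ D]) (rule equiv_class_self[OF eq D])
  then have r: "(D, D0) \<in> Drel C'" by simp
  then have "D0 \<in> Dset C'" by (simp add: Drel_def)
  then have "\<exists>A B. symp4 A B C' D0" by (simp add: Dset_def)
  then have "\<exists>B. symp4 (SOME A. \<exists>B. symp4 A B C' D0) B C' D0" by (rule someI_ex)
  then obtain B0 where s0: "symp4 (SOME A. \<exists>B. symp4 A B C' D0) B0 C' D0" by blast
  have "Gf Q T C' (Drel C' `` {D}) = val Q T C' D0 (SOME A. \<exists>B. symp4 A B C' D0)"
    unfolding Gf_def D0_def[symmetric] Let_def val_def using dz by (simp add: summand)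
  also have "\<dots> = val Q T C' D A" using IND[OF dz gQ gT s1 s0 r] by simp
  finally show ?thesis .
qed



lemma real_id:
  fixes n s t c a b :: real assumes nz: "n \<noteq> 0" "c \<noteq> 0" and h: "s * n + t * c = 1"
  shows "(n * a + n * b)/(n * n * c) = (n * (t * t * c * a) + n * t * b)/(n * n) + (n * s^2 * a + s * b)/c + 2 * s * t * a"
proof -
  have "(n * (t * t * c * a) + n * t * b)/(n * n) + (n * s^2 * a + s * b)/c + 2 * s * t * a = (a * (s * n + t * c)^2 + b * (s * n+t * c))/(n * c)"
    using nz by (simp add: field_simps power2_eq_square)
  also have "\<dots> = (a + b)/(n * c)" by (simp add: h)
  also have "\<dots> = (n * a + n * b)/(n * n * c)" using nz by (simp add: field_simps)
  finally show ?thesis by simp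
qed

lemma VALID:
  assumes s: "symp4 A B (iscale N C) D" and nz: "N \<noteq> 0" "det C \<noteq> 0"
    and hyp: "s * N + t * det C = 1" and gQ: "goodQ Q"
  shows "val Q T (iscale N C) D A =
    val (rmat (iscale t (adj C)) ** Q ** transpose (rmat (iscale t (adj C)))) T (mat N) (iscale t (adj C ** D)) (transpose A ** C)
    * val ((real_of_int s)^2 *\<^sub>R Q) T C (iscale s D) (iscale N A)"
proof -
  let ?J = "adj C" and ?c = "det C"
  note bf = big_facts[OF s nz]
  define \<alpha> where "\<alpha> = tau (A ** ?J) Q"
  define \<beta> where "\<beta> = tau (?J ** D) T"
  have ai: "\<alpha> \<in> \<int>" using gQ bf(2) by (simp add: goodQ_def \<alpha>_def)
  have jt: "transpose ?J ** transpose A = A ** ?J" using bf(2) by (simp add: symm_def transpose_mm)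
  have cj: "transpose (iscale t ?J) ** (transpose A ** C) ** iscale t ?J = iscale (t * t * ?c) (A ** ?J)"
  proof -
    have "transpose ?J ** (transpose A ** C) ** ?J = A ** ?J ** C ** ?J"
      by (simp add: matrix_mul_assoc jt)
    also have "\<dots> = iscale ?c (A ** ?J)" by (simp add: adj_left_assoc)
    finally show ?thesis by (simp add: mult_ac)
  qed
  have cj2: "tau (transpose ?J ** (transpose A ** C) ** ?J) Q = of_int ?c * \<alpha>"
  proof -
    have "transpose ?J ** (transpose A ** C) ** ?J = A ** ?J ** C ** ?J"
      by (simp add: matrix_mul_assoc jt)
    also have "\<dots> = iscale ?c (A ** ?J)" by (simp add: adj_left_assoc)
    finally show ?thesis by (simp add: tau_iscale \<alpha>_def)
  qed
  define x0 where "x0 = (tau (A ** adj (iscale N C)) Q + tau (adj (iscale N C) ** D) T) / real_of_int (det (iscale N C))"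
  define x1 where "x1 = (tau (transpose A ** C ** adj (mat N)) (rmat (iscale t (adj C)) ** Q ** transpose (rmat (iscale t (adj C))))
     + tau (adj (mat N) ** iscale t (adj C ** D)) T) / real_of_int (det (mat N :: imat))"
  define x2 where "x2 = (tau (iscale N A ** adj C) ((real_of_int s)^2 *\<^sub>R Q) + tau (adj C ** iscale s D) T) / real_of_int (det C)"
  have x0: "x0 = (of_int N * \<alpha> + of_int N * \<beta>) / (of_int N * of_int N * of_int ?c)"
    by (simp add: x0_def adj_iscale det_iscale tau_iscale \<alpha>_def \<beta>_def power2_eq_square)
  have x1: "x1 = (of_int N * (of_int t * of_int t * of_int ?c * \<alpha>) + of_int N * of_int t * \<beta>) / (of_int N * of_int N)"
    by (simp add: x1_def adj_mat det_mat2 tau_iscale tau_conj cj2 \<beta>_def power2_eq_square mult_ac)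
  have x2: "x2 = (of_int N * (of_int s)^2 * \<alpha> + of_int s * \<beta>) / of_int ?c"
    by (simp add: x2_def tau_iscale tau_scaleR \<alpha>_def \<beta>_def mult_ac)
  have hr: "real_of_int s * of_int N + of_int t * of_int ?c = 1"
    using hyp by (metis of_int_1 of_int_add of_int_mult)
  have nr: "real_of_int N \<noteq> 0" "real_of_int ?c \<noteq> 0" using nz by auto
  have "x0 = x1 + x2 + 2 * of_int s * of_int t * \<alpha>"
    unfolding x0 x1 x2 by (rule real_id[OF nr hr])
  then have "e x0 = e (x1 + x2)" using ai by (simp add: e_int)
  then show ?thesis by (simp add: val_def x0_def x1_def x2_def e_add)
qed

lemma relI:
  assumes "D1 \<in> Dset C'" "D1' \<in> Dset C'" "D1' = D1 + C' ** S" "symm S"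
  shows "Drel C' `` {D1} = Drel C' `` {D1'}"
proof -
  have "(D1, D1') \<in> Drel C'" using assms by (auto simp: Drel_def Lambda_symm)
  then show ?thesis using equiv_class_eq_iff[OF equivD[of C']] by blast
qed

lemma relE:
  assumes "Drel C' `` {D1} = Drel C' `` {D1'}" "D1 \<in> Dset C'" "D1' \<in> Dset C'"
  obtains S where "D1' = D1 + C' ** S" "symm S"
proof -
  have "(D1, D1') \<in> Drel C'" using assms eq_equiv_class_iff[OF equivD[of C']] by blast
  then show ?thesis using that by (auto simp: Drel_def Lambda_symm)
qed

theorem lemma6:
  fixes N s t :: int and C :: imat and Q T :: rmat
  assumes "prime N" and "N mod 4 = 3"
    and "det C \<noteq> 0" and "coprime (det C) N"
    and "s * N + t * det C = 1"
    and "Q \<in> Sset" and "T \<in> Sset"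
  shows "let X = (real_of_int (t * det C)) *\<^sub>R matrix_inv (rmat C) in
    Kl Q T (iscale N C) =
      Kl (X ** Q ** transpose X) T (mat N) * Kl ((real_of_int s)^2 *\<^sub>R Q) T C"
proof -
  have nz: "N \<noteq> 0" using prime_gt_0_int[OF assms(1)] by simp
  note cz = assms(3) and hyp = assms(5)
  let ?J = "adj C" and ?c = "det C" and ?NC = "iscale N C"
  have dNC: "det ?NC \<noteq> 0" using nz cz by (simp add: det_iscale)
  have dN: "det (mat N :: imat) \<noteq> 0" using nz by (simp add: det_mat2)
  define X where "X = (real_of_int (t * det C)) *\<^sub>R matrix_inv (rmat C)"
  have X: "X = rmat (iscale t ?J)"
    using cz by (simp add: X_def minv rmat_iscale)
  define Q1 where "Q1 = X ** Q ** transpose X"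
  define Q2 where "Q2 = (real_of_int s)^2 *\<^sub>R Q"
  have gQ: "goodQ Q" and gT: "goodQ T" using assms(6,7) by (auto intro: goodQ_Sset)
  have gQ1: "goodQ Q1" unfolding goodQ_def
  proof (intro allI impI)
    fix W assume "symm W"
    then have "symm (transpose (iscale t ?J) ** W ** iscale t ?J)" by (rule symm_conj)
    then show "tau W Q1 \<in> \<int>" using gQ by (simp add: Q1_def X tau_conj goodQ_def)
  qed
  have gQ2: "goodQ Q2" unfolding goodQ_def
  proof (intro allI impI)
    fix W assume "symm W"
    then have "tau W Q \<in> \<int>" using gQ by (simp add: goodQ_def)
    then show "tau W Q2 \<in> \<int>" by (simp add: Q2_def tau_scaleR)
  qed
  define rep where "rep cl = (SOME D. D \<in> cl)" for cl :: "imat set"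
  define Phi where "Phi cl = (Drel (mat N) `` {iscale t (?J ** rep cl)}, Drel C `` {iscale s (rep cl)})" for cl
  have dF1: "iscale t (?J ** D) \<in> Dset (mat N)" if "symp4 A B ?NC D" for A B D
    using F1[OF that nz cz hyp] by (auto simp: Dset_def)
  have dF2: "iscale s D \<in> Dset C" if "symp4 A B ?NC D" for A B D
    using F2[OF that nz cz hyp] by (auto simp: Dset_def)
  have phi_eq: "Phi (Drel ?NC `` {D}) = (Drel (mat N) `` {iscale t (?J ** D)}, Drel C `` {iscale s D})"
    if D: "D \<in> Dset ?NC" for D
  proof -
    let ?D' = "rep (Drel ?NC `` {D})"
    have "?D' \<in> Drel ?NC `` {D}" unfolding rep_def by (rule someI[of _ D]) (rule equiv_class_self[OF equivD D])
    then have "(D, ?D') \<in> Drel ?NC" by simp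
    then obtain S where D': "?D' \<in> Dset ?NC" "?D' = D + ?NC ** S" "symm S"
      by (auto simp: Drel_def Lambda_symm)
    obtain A B where sD: "symp4 A B ?NC D" using D by (auto simp: Dset_def)
    obtain A' B' where sD': "symp4 A' B' ?NC ?D'" using D'(1) by (auto simp: Dset_def)
    note w = WD[OF D'(2)]
    have "Drel (mat N) `` {iscale t (?J ** D)} = Drel (mat N) `` {iscale t (?J ** ?D')}"
      by (rule relI[OF dF1[OF sD] dF1[OF sD'] w(1)]) (rule symm_iscale[OF D'(3)])
    moreover have "Drel C `` {iscale s D} = Drel C `` {iscale s ?D'}"
      by (rule relI[OF dF2[OF sD] dF2[OF sD'] w(2)]) (rule symm_iscale[OF D'(3)])
    ultimately show ?thesis by (simp add: Phi_def)
  qed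
  have bij: "bij_betw Phi (Dset ?NC // Drel ?NC) (Dset (mat N) // Drel (mat N) \<times> Dset C // Drel C)"
    unfolding bij_betw_def
  proof (intro conjI)
    show "inj_on Phi (Dset ?NC // Drel ?NC)"
    proof (rule inj_onI)
      fix x y assume x: "x \<in> Dset ?NC // Drel ?NC" and y: "y \<in> Dset ?NC // Drel ?NC" and p: "Phi x = Phi y"
      obtain D where D: "x = Drel ?NC `` {D}" "D \<in> Dset ?NC" using x by (rule quotientE)
      obtain D' where D': "y = Drel ?NC `` {D'}" "D' \<in> Dset ?NC" using y by (rule quotientE)
      obtain A B where sD: "symp4 A B ?NC D" using D by (auto simp: Dset_def)
      obtain A' B' where sD': "symp4 A' B' ?NC D'" using D' by (auto simp: Dset_def)
      have e1: "Drel (mat N) `` {iscale t (?J ** D)} = Drel (mat N) `` {iscale t (?J ** D')}"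
        and e2: "Drel C `` {iscale s D} = Drel C `` {iscale s D'}"
        using p phi_eq[OF D(2)] phi_eq[OF D'(2)] D(1) D'(1) by auto
      obtain S1 where S1: "iscale t (?J ** D') = iscale t (?J ** D) + mat N ** S1" "symm S1"
        using relE[OF e1 dF1[OF sD] dF1[OF sD']] by blast
      obtain S2 where S2: "iscale s D' = iscale s D + C ** S2" "symm S2"
        using relE[OF e2 dF2[OF sD] dF2[OF sD']] by blast
      have "D' = D + ?NC ** (S1 + S2)" by (rule INJ[OF S1(1) S2(1) hyp])
      then have "Drel ?NC `` {D} = Drel ?NC `` {D'}"
        by (rule relI[OF D(2) D'(2)]) (rule symm_add[OF S1(2) S2(2)])
      then show "x = y" using D D' by simp
    qed
    show "Phi ` (Dset ?NC // Drel ?NC) = Dset (mat N) // Drel (mat N) \<times> Dset C // Drel C"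
    proof
      show "Phi ` (Dset ?NC // Drel ?NC) \<subseteq> Dset (mat N) // Drel (mat N) \<times> Dset C // Drel C"
      proof
        fix p assume "p \<in> Phi ` (Dset ?NC // Drel ?NC)"
        then obtain x where x: "x \<in> Dset ?NC // Drel ?NC" "p = Phi x" by blast
        obtain D where D: "x = Drel ?NC `` {D}" "D \<in> Dset ?NC" using x(1) by (rule quotientE)
        obtain A B where sD: "symp4 A B ?NC D" using D by (auto simp: Dset_def)
        show "p \<in> Dset (mat N) // Drel (mat N) \<times> Dset C // Drel C"
          using x(2) D phi_eq[OF D(2)] quotientI[OF dF1[OF sD]] quotientI[OF dF2[OF sD]] by auto
      qed
      show "Dset (mat N) // Drel (mat N) \<times> Dset C // Drel C \<subseteq> Phi ` (Dset ?NC // Drel ?NC)"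
      proof
        fix p assume "p \<in> Dset (mat N) // Drel (mat N) \<times> Dset C // Drel C"
        then obtain x y where p: "p = (x, y)" "x \<in> Dset (mat N) // Drel (mat N)" "y \<in> Dset C // Drel C"
          by blast
        obtain D1 where D1: "x = Drel (mat N) `` {D1}" "D1 \<in> Dset (mat N)" using p(2) by (rule quotientE)
        obtain D2 where D2: "y = Drel C `` {D2}" "D2 \<in> Dset C" using p(3) by (rule quotientE)
        obtain A1 B1 where s1: "symp4 A1 B1 (mat N) D1" using D1 by (auto simp: Dset_def)
        obtain A2 B2 where s2: "symp4 A2 B2 C D2" using D2 by (auto simp: Dset_def)
        note sj = SURJ[OF s1 s2 nz cz hyp]
        define D where "D = iscale N D2 + C ** D1"
        obtain Aw Bw where sD: "symp4 Aw Bw ?NC D" using sj unfolding D_def by blast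
        have DD: "D \<in> Dset ?NC" using sD by (auto simp: Dset_def)
        note l1 = L1[OF s1 dN] and l2 = L1[OF s2 cz]
        have symD1: "symm D1" using l1(3) by (simp add: adj_mat symm_cancel[OF nz])
        have r1: "Drel (mat N) `` {D1} = Drel (mat N) `` {iscale t (?J ** D)}"
          apply (rule relI[OF D1(2) dF1[OF sD]])
           apply (simp add: D_def REL[OF hyp])
          by (intro symm_diff symm_iscale l2(3) symD1)
        have r2: "Drel C `` {D2} = Drel C `` {iscale s D}"
          apply (rule relI[OF D2(2) dF2[OF sD]])
           apply (simp add: D_def REL[OF hyp])
          by (intro symm_diff symm_iscale l2(3) symD1)
        have "Phi (Drel ?NC `` {D}) = p" using phi_eq[OF DD] r1 r2 p D1 D2 by simp
        moreover have "Drel ?NC `` {D} \<in> Dset ?NC // Drel ?NC" using DD by (rule quotientI)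
        ultimately show "p \<in> Phi ` (Dset ?NC // Drel ?NC)" by blast
      qed
    qed
  qed
  have cls: "Gf Q T ?NC cl = Gf Q1 T (mat N) (fst (Phi cl)) * Gf Q2 T C (snd (Phi cl))"
    if cl: "cl \<in> Dset ?NC // Drel ?NC" for cl
  proof -
    obtain D where D: "cl = Drel ?NC `` {D}" "D \<in> Dset ?NC" using cl by (rule quotientE)
    obtain A B where sD: "symp4 A B ?NC D" using D by (auto simp: Dset_def)
    have "Gf Q T ?NC cl = val Q T ?NC D A" using Gval[OF dNC gQ gT sD] D by simp
    also have "\<dots> = val Q1 T (mat N) (iscale t (?J ** D)) (transpose A ** C) * val Q2 T C (iscale s D) (iscale N A)"
      unfolding Q1_def Q2_def X by (rule VALID[OF sD nz cz hyp gQ])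
    also have "val Q1 T (mat N) (iscale t (?J ** D)) (transpose A ** C) = Gf Q1 T (mat N) (fst (Phi cl))"
      using Gval[OF dN gQ1 gT F1[OF sD nz cz hyp]] phi_eq[OF D(2)] D(1) by simp
    also have "val Q2 T C (iscale s D) (iscale N A) = Gf Q2 T C (snd (Phi cl))"
      using Gval[OF cz gQ2 gT F2[OF sD nz cz hyp]] phi_eq[OF D(2)] D(1) by simp
    finally show ?thesis .
  qed
  have "Kl Q T ?NC = (\<Sum>cl \<in> Dset ?NC // Drel ?NC. Gf Q1 T (mat N) (fst (Phi cl)) * Gf Q2 T C (snd (Phi cl)))"
    unfolding Kl_Gf by (rule sum.cong[OF refl cls])
  also have "\<dots> = (\<Sum>p \<in> Dset (mat N) // Drel (mat N) \<times> Dset C // Drel C. Gf Q1 T (mat N) (fst p) * Gf Q2 T C (snd p))"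
    using sum.reindex_bij_betw[OF bij, of "\<lambda>p. Gf Q1 T (mat N) (fst p) * Gf Q2 T C (snd p)"] by simp
  also have "\<dots> = Kl Q1 T (mat N) * Kl Q2 T C"
    unfolding Kl_Gf sum_product sum.cartesian_product by (simp add: case_prod_beta)
  finally have "Kl Q T ?NC = Kl Q1 T (mat N) * Kl Q2 T C" .
  then show ?thesis unfolding Let_def Q1_def Q2_def X_def .
qed


end
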